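(* Let $X$ be a compact Hausdorff space, $\mathcal C=C(X)$, $\alpha\colon X\to X$ continuous, $\delta f=f\circ\alpha$, $A$ a transfer operator for $(\mathcal C,\delta)$. Fix $\mu\in M_\delta(\mathcal C)$, $n\in\mathbb N$ and a partition of unity $D$. Let $(m_k)\subset M(\mathcal C)$ be a sequence with $\sum_{g\in D}\mu[g]\ln\frac{m_k[A^ng]}{\mu[g]}\to\tau_n(\mu,D)$, and let $(m_{k_i})$ be a subsequence for which the limits $C_n(\mu,g,D):=\lim_{i\to\infty}m_{k_i}[A^ng]$ exist for all $g\in D$. If $\tau_n(\mu,D)>-\infty$, then \[ \sup_{m\in M(\mathcal C)}\ \sum_{g\in D,\ \mu[g]>0}\mu[g]\,\frac{m[A^ng]}{C_n(\mu,g,D)}=1. \]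
   Context: A transfer operator for $(\mathcal C,\delta)$ is a positive linear operator $A\colon\mathcal C\to\mathcal C$ with $A((\delta f)g)=f\,Ag$ for all $f,g\in\mathcal C$. $M(\mathcal C)$ is the set of positive linear functionals $m$ on $\mathcal C$ with $m[\mathbf 1]=1$ ($\mathbf 1$ the constant $1$); $M_\delta(\mathcal C)$ those also satisfying $\mu[\delta f]=\mu[f]$ for all $f$. A partition of unity is a finite set $D$ of nonnegative elements of $\mathcal C$ summing to $\mathbf 1$. $\tau_n(\mu,D)=\sup_{m\in M(\mathcal C)}\sum_{g\in D}\mu[g]\ln\frac{m[A^ng]}{\mu[g]}$, where summands with $\mu[g]=0$ are set to $0$ and $\ln0=-\infty$. *)

theory Defs
  imports "HOL-Analysis.Analysis"
begin

definition CX :: "('a::topological_space \<Rightarrow> real) set" where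
  "CX = {f. continuous_on UNIV f}"

definition lin_on_CX :: "(('a::topological_space \<Rightarrow> real) \<Rightarrow> real) \<Rightarrow> bool" where
  "lin_on_CX T \<longleftrightarrow> (\<forall>f\<in>CX. \<forall>g\<in>CX. T (\<lambda>x. f x + g x) = T f + T g)
                   \<and> (\<forall>c. \<forall>f\<in>CX. T (\<lambda>x. c * f x) = c * T f)"

definition lin_op_CX :: "(('a::topological_space \<Rightarrow> real) \<Rightarrow> ('b \<Rightarrow> real)) \<Rightarrow> bool" where
  "lin_op_CX T \<longleftrightarrow> (\<forall>f\<in>CX. \<forall>g\<in>CX. T (\<lambda>x. f x + g x) = (\<lambda>x. T f x + T g x))
                   \<and> (\<forall>c. \<forall>f\<in>CX. T (\<lambda>x. c * f x) = (\<lambda>x. c * T f x))"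

definition transfer_operator ::
  "('a::topological_space \<Rightarrow> 'a) \<Rightarrow> (('a \<Rightarrow> real) \<Rightarrow> ('a \<Rightarrow> real)) \<Rightarrow> bool" where
  "transfer_operator \<alpha> A \<longleftrightarrow>
     (\<forall>f\<in>CX. A f \<in> CX) \<and> lin_op_CX A \<and>
     (\<forall>f\<in>CX. (\<forall>x. f x \<ge> 0) \<longrightarrow> (\<forall>x. A f x \<ge> 0)) \<and>
     (\<forall>f\<in>CX. \<forall>g\<in>CX. A (\<lambda>x. (f \<circ> \<alpha>) x * g x) = (\<lambda>x. f x * A g x))"

definition MC :: "(('a::topological_space \<Rightarrow> real) \<Rightarrow> real) set" where
  "MC = {m. lin_on_CX m \<and> (\<forall>f\<in>CX. (\<forall>x. f x \<ge> 0) \<longrightarrow> m f \<ge> 0) \<and> m (\<lambda>x. 1) = 1}"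

definition MC_delta :: "('a::topological_space \<Rightarrow> 'a) \<Rightarrow> (('a \<Rightarrow> real) \<Rightarrow> real) set" where
  "MC_delta \<alpha> = {\<mu>\<in>MC. \<forall>f\<in>CX. \<mu> (f \<circ> \<alpha>) = \<mu> f}"

definition partition_of_unity :: "('a::topological_space \<Rightarrow> real) set \<Rightarrow> bool" where
  "partition_of_unity D \<longleftrightarrow> finite D \<and> D \<subseteq> CX \<and> (\<forall>g\<in>D. \<forall>x. g x \<ge> 0)
      \<and> (\<forall>x. (\<Sum>g\<in>D. g x) = 1)"

text \<open>The summand mu[g] ln(m[A^n g]/mu[g]), with value 0 if mu[g] = 0 and ln 0 = -infinity.\<close>
definition tau_term :: "real \<Rightarrow> real \<Rightarrow> ereal" where
  "tau_term a b = (if a = 0 then 0 else if b = 0 then -\<infinity> else ereal (a * ln (b / a)))"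

definition tau_sum ::
  "(('a::topological_space \<Rightarrow> real) \<Rightarrow> ('a \<Rightarrow> real)) \<Rightarrow> nat \<Rightarrow> (('a \<Rightarrow> real) \<Rightarrow> real)
    \<Rightarrow> ('a \<Rightarrow> real) set \<Rightarrow> (('a \<Rightarrow> real) \<Rightarrow> real) \<Rightarrow> ereal" where
  "tau_sum A n \<mu> D m = (\<Sum>g\<in>D. tau_term (\<mu> g) (m ((A ^^ n) g)))"

definition tau ::
  "(('a::topological_space \<Rightarrow> real) \<Rightarrow> ('a \<Rightarrow> real)) \<Rightarrow> nat \<Rightarrow> (('a \<Rightarrow> real) \<Rightarrow> real)
    \<Rightarrow> ('a \<Rightarrow> real) set \<Rightarrow> ereal" where
  "tau A n \<mu> D = (SUP m\<in>MC. tau_sum A n \<mu> D m)"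

end

theory Submission
  imports Defs
begin

lemma CX_const: "(\<lambda>x. c) \<in> CX" by (simp add: CX_def)
lemma CX_add: "f \<in> CX \<Longrightarrow> g \<in> CX \<Longrightarrow> (\<lambda>x. f x + g x) \<in> CX"
  by (simp add: CX_def continuous_on_add)
lemma CX_scale: "f \<in> CX \<Longrightarrow> (\<lambda>x. c * f x) \<in> CX"
  by (simp add: CX_def continuous_on_mult)
lemma CX_sum: "F \<subseteq> CX \<Longrightarrow> (\<lambda>x. \<Sum>g\<in>F. g x) \<in> CX"
  unfolding CX_def by (auto intro!: continuous_on_sum)

lemma funpow_CX:
  assumes "transfer_operator \<alpha> A" "f \<in> CX"
  shows "(A ^^ n) f \<in> CX \<and> ((\<forall>x. f x \<ge> 0) \<longrightarrow> (\<forall>x. (A ^^ n) f x \<ge> 0))"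
proof -
  have T: "\<forall>f\<in>CX. A f \<in> CX" "\<forall>f\<in>CX. (\<forall>x. f x \<ge> 0) \<longrightarrow> (\<forall>x. A f x \<ge> 0)"
    using assms(1) unfolding transfer_operator_def by auto
  show ?thesis using assms(2) by (induction n) (simp_all add: T)
qed

lemma lin_zero: "lin_on_CX m \<Longrightarrow> m (\<lambda>x. 0) = 0"
proof -
  assume "lin_on_CX m"
  then have "\<forall>c. \<forall>f\<in>CX. m (\<lambda>x. c * f x) = c * m f" unfolding lin_on_CX_def by blast
  from this[rule_format, where c=0 and f="\<lambda>x. 1", OF CX_const] show ?thesis by simp
qed

lemma lin_const: "m \<in> MC \<Longrightarrow> m (\<lambda>x. c) = c"
proof -
  assume "m \<in> MC"
  then have "\<forall>c. \<forall>f\<in>CX. m (\<lambda>x. c * f x) = c * m f" "m (\<lambda>x. 1) = 1"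
    unfolding MC_def lin_on_CX_def by auto
  from this(1)[rule_format, where c=c and f="\<lambda>x. 1", OF CX_const] this(2) show ?thesis by simp
qed

lemma MC_nonneg: "m \<in> MC \<Longrightarrow> f \<in> CX \<Longrightarrow> \<forall>x. f x \<ge> 0 \<Longrightarrow> m f \<ge> 0"
  unfolding MC_def by auto

lemma MC_le:
  assumes m: "m \<in> MC" and f: "f \<in> CX" and B: "\<forall>x. f x \<le> B"
  shows "m f \<le> B"
proof -
  have lin: "lin_on_CX m" using m unfolding MC_def by auto
  have mf: "(\<lambda>x. (-1) * f x) \<in> CX" using CX_scale[OF f] .
  have "m (\<lambda>x. B + (-1) * f x) = m (\<lambda>x. B) + m (\<lambda>x. (-1) * f x)"
  proof -
    have add: "\<forall>f\<in>CX. \<forall>g\<in>CX. m (\<lambda>x. f x + g x) = m f + m g" using lin unfolding lin_on_CX_def by blast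
    show ?thesis by (rule add[rule_format, OF CX_const mf])
  qed
  also have "\<dots> = B - m f"
  proof -
    have sc: "\<forall>c. \<forall>f\<in>CX. m (\<lambda>x. c * f x) = c * m f" using lin unfolding lin_on_CX_def by blast
    have "m (\<lambda>x. (-1) * f x) = (-1) * m f" by (rule sc[rule_format, OF f])
    then show ?thesis using lin_const[OF m] by simp
  qed
  finally have eq: "m (\<lambda>x. B + (-1) * f x) = B - m f" .
  have "m (\<lambda>x. B + (-1) * f x) \<ge> 0"
    using MC_nonneg[OF m CX_add[OF CX_const mf]] B by simp
  then show ?thesis using eq by simp
qed

lemma lin_sum:
  assumes "lin_on_CX m" "finite F" "F \<subseteq> CX"
  shows "m (\<lambda>x. \<Sum>g\<in>F. g x) = (\<Sum>g\<in>F. m g)"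
  using assms(2,3)
proof (induction F rule: finite_induct)
  case empty
  then show ?case using lin_zero[OF assms(1)] by simp
next
  case (insert h F)
  have "m (\<lambda>x. \<Sum>g\<in>insert h F. g x) = m (\<lambda>x. h x + (\<Sum>g\<in>F. g x))"
    using insert by simp
  also have "\<dots> = m h + m (\<lambda>x. \<Sum>g\<in>F. g x)"
    using assms(1) insert CX_sum[of F] unfolding lin_on_CX_def by auto
  finally show ?case using insert by simp
qed

lemma MC_conv:
  assumes m1: "m1 \<in> MC" and m2: "m2 \<in> MC" and t: "0 \<le> t" "t \<le> 1"
  shows "(\<lambda>f. (1 - t) * m1 f + t * m2 f) \<in> MC"
proof -
  have l1: "lin_on_CX m1" and l2: "lin_on_CX m2" using m1 m2 unfolding MC_def by auto
  have a1: "\<forall>f\<in>CX. \<forall>g\<in>CX. m1 (\<lambda>x. f x + g x) = m1 f + m1 g"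
   and s1: "\<forall>c. \<forall>f\<in>CX. m1 (\<lambda>x. c * f x) = c * m1 f" using l1 unfolding lin_on_CX_def by auto
  have a2: "\<forall>f\<in>CX. \<forall>g\<in>CX. m2 (\<lambda>x. f x + g x) = m2 f + m2 g"
   and s2: "\<forall>c. \<forall>f\<in>CX. m2 (\<lambda>x. c * f x) = c * m2 f" using l2 unfolding lin_on_CX_def by auto
  have pos: "(1 - t) * m1 f + t * m2 f \<ge> 0" if "f \<in> CX" "\<forall>x. f x \<ge> 0" for f
  proof -
    have "m1 f \<ge> 0" "m2 f \<ge> 0" using MC_nonneg m1 m2 that by auto
    then show ?thesis using t by simp
  qed
  have one: "(1 - t) * m1 (\<lambda>x. 1) + t * m2 (\<lambda>x. 1) = 1" using m1 m2 unfolding MC_def by simp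
  have lin: "lin_on_CX (\<lambda>f. (1 - t) * m1 f + t * m2 f)"
    unfolding lin_on_CX_def
  proof (intro conjI ballI allI)
    fix f g :: "'a \<Rightarrow> real" assume "f \<in> CX" "g \<in> CX"
    then show "(1 - t) * m1 (\<lambda>x. f x + g x) + t * m2 (\<lambda>x. f x + g x) =
       (1 - t) * m1 f + t * m2 f + ((1 - t) * m1 g + t * m2 g)"
      using a1 a2 by (simp add: algebra_simps)
  next
    fix c and f :: "'a \<Rightarrow> real" assume "f \<in> CX"
    then show "(1 - t) * m1 (\<lambda>x. c * f x) + t * m2 (\<lambda>x. c * f x) = c * ((1 - t) * m1 f + t * m2 f)"
      using s1 s2 by (simp add: algebra_simps)
  qed
  show ?thesis unfolding MC_def mem_Collect_eq by (intro conjI lin one ballI impI pos)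
qed

lemma tau_sum_real:
  assumes "finite D" "\<forall>g\<in>D. \<mu> g \<ge> 0" "\<forall>g\<in>D. \<mu> g > 0 \<longrightarrow> m ((A ^^ n) g) > 0"
  shows "tau_sum A n \<mu> D m = ereal (\<Sum>g\<in>{g\<in>D. \<mu> g > 0}. \<mu> g * ln (m ((A ^^ n) g) / \<mu> g))"
proof -
  have "tau_sum A n \<mu> D m = (\<Sum>g\<in>D. ereal (if \<mu> g > 0 then \<mu> g * ln (m ((A ^^ n) g) / \<mu> g) else 0))"
    unfolding tau_sum_def
  proof (rule sum.cong[OF refl])
    fix g assume g: "g \<in> D"
    show "tau_term (\<mu> g) (m ((A ^^ n) g)) = ereal (if \<mu> g > 0 then \<mu> g * ln (m ((A ^^ n) g) / \<mu> g) else 0)"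
    proof (cases "\<mu> g > 0")
      case True
      then show ?thesis using assms(3) g unfolding tau_term_def by auto
    next
      case False
      then have "\<mu> g = 0" using assms(2) g by force
      then show ?thesis unfolding tau_term_def by simp
    qed
  qed
  also have "\<dots> = ereal (\<Sum>g\<in>D. (if \<mu> g > 0 then \<mu> g * ln (m ((A ^^ n) g) / \<mu> g) else 0))"
    by (simp add: sum_ereal)
  also have "(\<Sum>g\<in>D. (if \<mu> g > 0 then \<mu> g * ln (m ((A ^^ n) g) / \<mu> g) else 0))
     = (\<Sum>g\<in>{g\<in>D. \<mu> g > 0}. \<mu> g * ln (m ((A ^^ n) g) / \<mu> g))"
    using assms(1) by (simp add: sum.inter_filter)
  finally show ?thesis .
qed

lemma tau_term_le:
  assumes "a > 0" "0 \<le> b" "b \<le> B"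
  shows "tau_term a b \<le> ereal (a * ln (B / a))"
proof (cases "b = 0")
  case True
  then show ?thesis using assms unfolding tau_term_def by simp
next
  case False
  then have "ln (b / a) \<le> ln (B / a)" using assms by (simp add: divide_right_mono)
  then show ?thesis using assms False unfolding tau_term_def by simp
qed


theorem lemma1p13:
  fixes \<alpha> :: "'a::t2_space \<Rightarrow> 'a"
    and A :: "('a \<Rightarrow> real) \<Rightarrow> ('a \<Rightarrow> real)"
    and \<mu> :: "('a \<Rightarrow> real) \<Rightarrow> real"
    and n :: nat
    and D :: "('a \<Rightarrow> real) set"
    and ms :: "nat \<Rightarrow> (('a \<Rightarrow> real) \<Rightarrow> real)"
    and r :: "nat \<Rightarrow> nat"
    and Cn :: "('a \<Rightarrow> real) \<Rightarrow> real"
  assumes "compact (UNIV :: 'a set)"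
    and "continuous_on UNIV \<alpha>"
    and "transfer_operator \<alpha> A"
    and "\<mu> \<in> MC_delta \<alpha>"
    and "partition_of_unity D"
    and "\<forall>k. ms k \<in> MC"
    and "(\<lambda>k. tau_sum A n \<mu> D (ms k)) \<longlonglongrightarrow> tau A n \<mu> D"
    and "strict_mono r"
    and "\<forall>g\<in>D. (\<lambda>i. ms (r i) ((A ^^ n) g)) \<longlonglongrightarrow> Cn g"
    and "tau A n \<mu> D > -\<infinity>"
  shows "(SUP m\<in>MC. ereal (\<Sum>g\<in>{g\<in>D. \<mu> g > 0}. \<mu> g * m ((A ^^ n) g) / Cn g)) = 1"
proof -
  note cpt = assms(1) and TO = assms(3) and msMC = assms(6) and lim = assms(7)
    and rmono = assms(8) and limC = assms(9) and taufin = assms(10)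
  have fin: "finite D" and Dsub: "D \<subseteq> CX" and gnn: "\<forall>g\<in>D. \<forall>x. g x \<ge> 0"
    and sum1: "\<forall>x. (\<Sum>g\<in>D. g x) = 1"
    using assms(5) unfolding partition_of_unity_def by auto
  have muMC: "\<mu> \<in> MC" using assms(4) unfolding MC_delta_def by auto
  have munn: "\<forall>g\<in>D. \<mu> g \<ge> 0" using MC_nonneg[OF muMC] Dsub gnn by auto
  define Dp where "Dp = {g\<in>D. \<mu> g > 0}"
  have finDp: "finite Dp" using fin unfolding Dp_def by auto
  define F where "F g = (A ^^ n) g" for g
  have FCX: "\<forall>g\<in>D. F g \<in> CX \<and> (\<forall>x. F g x \<ge> 0)"
    using funpow_CX[OF TO] Dsub gnn unfolding F_def by blast
  have mnn: "\<forall>m\<in>MC. \<forall>g\<in>D. m (F g) \<ge> 0" using FCX MC_nonneg by blast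
  have "\<forall>g\<in>D. \<exists>B>0. \<forall>x. F g x \<le> B"
  proof
    fix g assume g: "g \<in> D"
    have "compact (range (F g))"
      using compact_continuous_image[OF _ cpt] FCX g unfolding CX_def by blast
    then have "bounded (range (F g))" by (rule compact_imp_bounded)
    then obtain a where a: "\<forall>y\<in>range (F g). \<bar>y\<bar> \<le> a" unfolding bounded_real by blast
    show "\<exists>B>0. \<forall>x. F g x \<le> B"
    proof (rule exI[of _ "max 1 a"], intro conjI allI)
      fix x have "\<bar>F g x\<bar> \<le> a" using a by auto
      then show "F g x \<le> max 1 a" by linarith
    qed simp
  qed
  then obtain B where B: "\<forall>g\<in>D. B g > 0 \<and> (\<forall>x. F g x \<le> B g)" by metis
  have mle: "\<forall>m\<in>MC. \<forall>g\<in>D. m (F g) \<le> B g" using MC_le B FCX by blast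
  define bnd where "bnd g = (if \<mu> g > 0 then \<mu> g * ln (B g / \<mu> g) else 0)" for g
  define trm where "trm m g = tau_term (\<mu> g) (m (F g))" for m g
  have tsum: "tau_sum A n \<mu> D m = (\<Sum>g\<in>D. trm m g)" for m
    unfolding tau_sum_def trm_def F_def ..
  have trm_le: "trm m g \<le> ereal (bnd g)" if "m \<in> MC" "g \<in> D" for m g
  proof (cases "\<mu> g > 0")
    case True
    then show ?thesis unfolding trm_def bnd_def
      using tau_term_le[OF True] mnn mle that by auto
  next
    case False
    then have "\<mu> g = 0" using munn that by force
    then show ?thesis unfolding trm_def bnd_def tau_term_def by simp
  qed
  have tau_le_rest: "tau_sum A n \<mu> D m \<le> trm m g0 + ereal (\<Sum>g\<in>D - {g0}. bnd g)"
    if "m \<in> MC" "g0 \<in> D" for m g0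
  proof -
    have "tau_sum A n \<mu> D m = trm m g0 + (\<Sum>g\<in>D - {g0}. trm m g)"
      unfolding tsum using sum.remove[OF fin that(2)] by simp
    also have "(\<Sum>g\<in>D - {g0}. trm m g) \<le> (\<Sum>g\<in>D - {g0}. ereal (bnd g))"
      by (rule sum_mono) (use trm_le that in auto)
    also have "\<dots> = ereal (\<Sum>g\<in>D - {g0}. bnd g)" by (simp add: sum_ereal)
    finally show ?thesis by (simp add: add_left_mono)
  qed
  have tau_le: "tau_sum A n \<mu> D m \<le> ereal (\<Sum>g\<in>D. bnd g)" if "m \<in> MC" for m
  proof -
    have "tau_sum A n \<mu> D m \<le> (\<Sum>g\<in>D. ereal (bnd g))"
      unfolding tsum by (rule sum_mono) (use trm_le that in auto)
    then show ?thesis by (simp add: sum_ereal)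
  qed
  have "tau A n \<mu> D \<le> ereal (\<Sum>g\<in>D. bnd g)"
    unfolding tau_def by (rule SUP_least) (use tau_le in auto)
  then obtain T where T: "tau A n \<mu> D = ereal T" using taufin
    by (cases "tau A n \<mu> D") auto
  define R where "R g = (\<Sum>h\<in>D - {g}. bnd h)" for g
  define c where "c g = \<mu> g * exp ((T - 1 - R g) / \<mu> g)" for g
  have cpos: "\<forall>g\<in>Dp. c g > 0" unfolding c_def Dp_def by auto
  have "eventually (\<lambda>k. ereal (T - 1) < tau_sum A n \<mu> D (ms k)) sequentially"
    using order_tendstoD(1)[OF lim] T by simp
  then have ev1: "eventually (\<lambda>k. \<forall>g\<in>Dp. c g < ms k (F g)) sequentially"
  proof (rule eventually_mono)
    fix k assume k: "ereal (T - 1) < tau_sum A n \<mu> D (ms k)"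
    show "\<forall>g\<in>Dp. c g < ms k (F g)"
    proof
      fix g assume g: "g \<in> Dp"
      then have gD: "g \<in> D" and mug: "\<mu> g > 0" unfolding Dp_def by auto
      have lt: "ereal (T - 1) < trm (ms k) g + ereal (R g)"
        using k tau_le_rest[OF msMC[rule_format] gD] unfolding R_def by (rule less_le_trans)
      have "ms k (F g) \<noteq> 0"
      proof
        assume "ms k (F g) = 0"
        then have "trm (ms k) g = -\<infinity>" unfolding trm_def tau_term_def using mug by simp
        then show False using lt by simp
      qed
      moreover have "ms k (F g) \<ge> 0" using mnn msMC gD by blast
      ultimately have mpos: "ms k (F g) > 0" by linarith
      have "trm (ms k) g = ereal (\<mu> g * ln (ms k (F g) / \<mu> g))"
        unfolding trm_def tau_term_def using mug mpos by simp
      then have "T - 1 < \<mu> g * ln (ms k (F g) / \<mu> g) + R g" using lt by simp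
      then have "(T - 1 - R g) / \<mu> g < ln (ms k (F g) / \<mu> g)"
        using mug by (simp add: pos_divide_less_eq mult.commute)
      then have "exp ((T - 1 - R g) / \<mu> g) < ms k (F g) / \<mu> g"
        using mpos mug by (metis divide_pos_pos exp_less_cancel_iff exp_ln)
      then show "c g < ms k (F g)" unfolding c_def using mug by (simp add: pos_less_divide_eq mult.commute)
    qed
  qed
  then obtain N where N: "\<forall>k\<ge>N. \<forall>g\<in>Dp. c g < ms k (F g)" unfolding eventually_sequentially by blast
  have NR: "\<forall>i\<ge>N. \<forall>g\<in>Dp. c g < ms (r i) (F g)"
    using N seq_suble[OF rmono] le_trans by blast
  have limCF: "\<forall>g\<in>D. (\<lambda>i. ms (r i) (F g)) \<longlonglongrightarrow> Cn g" using limC unfolding F_def by simp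
  have Cge: "\<forall>g\<in>Dp. c g \<le> Cn g"
  proof
    fix g assume g: "g \<in> Dp"
    show "c g \<le> Cn g"
    proof (rule LIMSEQ_le_const[OF limCF[rule_format]])
      show "g \<in> D" using g unfolding Dp_def by auto
      show "\<exists>N. \<forall>n\<ge>N. c g \<le> ms (r n) (F g)" using g NR less_imp_le by blast
    qed
  qed
  have Cpos: "\<forall>g\<in>Dp. Cn g > 0" using Cge cpos by fastforce
  define S where "S m = (\<Sum>g\<in>Dp. \<mu> g * ln (m (F g) / \<mu> g))" for m
  have tau_eq: "tau_sum A n \<mu> D m = ereal (S m)" if "\<forall>g\<in>Dp. m (F g) > 0" for m
    unfolding S_def Dp_def F_def by (rule tau_sum_real[OF fin munn]) (use that in \<open>auto simp: Dp_def F_def\<close>)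
  define Sstar where "Sstar = (\<Sum>g\<in>Dp. \<mu> g * ln (Cn g / \<mu> g))"
  have "(\<lambda>i. S (ms (r i))) \<longlonglongrightarrow> Sstar"
    unfolding S_def Sstar_def
  proof (rule tendsto_sum, rule tendsto_mult[OF tendsto_const], rule tendsto_ln)
    fix g assume g: "g \<in> Dp"
    then show "(\<lambda>i. ms (r i) (F g) / \<mu> g) \<longlonglongrightarrow> Cn g / \<mu> g"
      using limCF unfolding Dp_def by (auto intro: tendsto_divide tendsto_const)
    show "Cn g / \<mu> g \<noteq> 0" using g Cpos unfolding Dp_def by auto
  qed
  then have l1: "(\<lambda>i. ereal (S (ms (r i)))) \<longlonglongrightarrow> ereal Sstar" by (rule tendsto_ereal)
  have "(\<lambda>i. tau_sum A n \<mu> D (ms (r i))) \<longlonglongrightarrow> tau A n \<mu> D"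
    using LIMSEQ_subseq_LIMSEQ[OF lim rmono] by (simp add: comp_def)
  moreover have "eventually (\<lambda>i. tau_sum A n \<mu> D (ms (r i)) = ereal (S (ms (r i)))) sequentially"
    unfolding eventually_sequentially
  proof (intro exI allI impI)
    fix i assume "N \<le> i"
    then have "\<forall>g\<in>Dp. ms (r i) (F g) > 0" using NR cpos by fastforce
    then show "tau_sum A n \<mu> D (ms (r i)) = ereal (S (ms (r i)))" using tau_eq by simp
  qed
  ultimately have "(\<lambda>i. ereal (S (ms (r i)))) \<longlonglongrightarrow> tau A n \<mu> D"
    by (rule Lim_transform_eventually)
  with l1 have TS: "T = Sstar" using T LIMSEQ_unique by fastforce
  have key1: "(\<Sum>g\<in>Dp. \<mu> g * ln (((1 - t) * Cn g + t * m (F g)) / \<mu> g)) \<le> T"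
    if m: "m \<in> MC" and t: "0 < t" "t < 1" for m t
  proof -
    define mt where "mt i = (\<lambda>f. (1 - t) * ms (r i) f + t * m f)" for i
    have mtMC: "mt i \<in> MC" for i unfolding mt_def using MC_conv[OF msMC[rule_format] m] t by simp
    have "(\<lambda>i. S (mt i)) \<longlonglongrightarrow> (\<Sum>g\<in>Dp. \<mu> g * ln (((1 - t) * Cn g + t * m (F g)) / \<mu> g))"
      unfolding S_def mt_def
    proof (rule tendsto_sum, rule tendsto_mult[OF tendsto_const], rule tendsto_ln)
      fix g assume g: "g \<in> Dp"
      then show "(\<lambda>i. ((1 - t) * ms (r i) (F g) + t * m (F g)) / \<mu> g) \<longlonglongrightarrow> ((1 - t) * Cn g + t * m (F g)) / \<mu> g"
        using limCF unfolding Dp_def by (auto intro!: tendsto_intros)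
      have "m (F g) \<ge> 0" using g mnn m unfolding Dp_def by auto
      then have "(1 - t) * Cn g + t * m (F g) > 0" using g Cpos t
        by (simp add: add_pos_nonneg)
      then show "((1 - t) * Cn g + t * m (F g)) / \<mu> g \<noteq> 0" using g unfolding Dp_def by auto
    qed
    moreover have "\<exists>N. \<forall>i\<ge>N. S (mt i) \<le> T"
    proof (intro exI allI impI)
      fix i assume "N \<le> i"
      then have "\<forall>g\<in>Dp. ms (r i) (F g) > 0" using NR cpos by fastforce
      moreover have "\<forall>g\<in>Dp. m (F g) \<ge> 0" using mnn m unfolding Dp_def by auto
      ultimately have "\<forall>g\<in>Dp. mt i (F g) > 0" unfolding mt_def using t
        by (simp add: add_pos_nonneg)
      then have "tau_sum A n \<mu> D (mt i) = ereal (S (mt i))" using tau_eq by simp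
      moreover have "tau_sum A n \<mu> D (mt i) \<le> tau A n \<mu> D"
        unfolding tau_def by (rule SUP_upper[OF mtMC])
      ultimately show "S (mt i) \<le> T" using T by simp
    qed
    ultimately show ?thesis by (rule LIMSEQ_le_const2)
  qed
  have lnlow: "ln x \<ge> 1 - 1 / x" if "x > 0" for x :: real
  proof -
    have "ln (1 / x) \<le> 1 / x - 1" using that by (intro ln_le_minus_one) simp
    moreover have "ln (1 / x) = - ln x" using that by (simp add: ln_div)
    ultimately show ?thesis by simp
  qed
  have key2: "(\<Sum>g\<in>Dp. \<mu> g * ((m (F g) / Cn g - 1) / (1 + t * (m (F g) / Cn g - 1)))) \<le> 0"
    if m: "m \<in> MC" and t: "0 < t" "t < 1" for m t
  proof -
    have pt: "\<mu> g * ln (((1 - t) * Cn g + t * m (F g)) / \<mu> g) \<ge>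
        \<mu> g * ln (Cn g / \<mu> g) + t * (\<mu> g * ((m (F g) / Cn g - 1) / (1 + t * (m (F g) / Cn g - 1))))"
      if g: "g \<in> Dp" for g
    proof -
      have mug: "\<mu> g > 0" and C: "Cn g > 0" using g Cpos unfolding Dp_def by auto
      have mF: "m (F g) \<ge> 0" using g mnn m unfolding Dp_def by auto
      define a where "a = m (F g) / Cn g"
      have a0: "a \<ge> 0" unfolding a_def using mF C by simp
      define x where "x = 1 + t * (a - 1)"
      have xeq: "x = (1 - t) + t * a" unfolding x_def by algebra
      have xpos: "x > 0" unfolding xeq using t a0 by (simp add: add_pos_nonneg)
      have eq: "((1 - t) * Cn g + t * m (F g)) / \<mu> g = (Cn g / \<mu> g) * x"
        unfolding xeq a_def using C mug by (simp add: field_simps)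
      have "ln (((1 - t) * Cn g + t * m (F g)) / \<mu> g) = ln (Cn g / \<mu> g) + ln x"
        unfolding eq using C mug xpos by (subst ln_mult) auto
      moreover have "ln x \<ge> t * ((a - 1) / x)"
        using lnlow[OF xpos] xpos unfolding x_def by (simp add: field_simps)
      ultimately have L: "ln (((1 - t) * Cn g + t * m (F g)) / \<mu> g) = ln (Cn g / \<mu> g) + ln x"
        and H: "ln x \<ge> t * ((a - 1) / x)" by auto
      have H2: "\<mu> g * ln x \<ge> \<mu> g * (t * ((a - 1) / x))" using mult_left_mono[OF H] mug by simp
      have "\<mu> g * ln (((1 - t) * Cn g + t * m (F g)) / \<mu> g) = \<mu> g * ln (Cn g / \<mu> g) + \<mu> g * ln x"
        unfolding L by (simp add: distrib_left)
      moreover have "t * (\<mu> g * ((a - 1) / x)) = \<mu> g * (t * ((a - 1) / x))" by simp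
      ultimately show ?thesis using H2 unfolding a_def[symmetric] x_def[symmetric] by linarith
    qed
    have "Sstar + t * (\<Sum>g\<in>Dp. \<mu> g * ((m (F g) / Cn g - 1) / (1 + t * (m (F g) / Cn g - 1))))
        = (\<Sum>g\<in>Dp. \<mu> g * ln (Cn g / \<mu> g) + t * (\<mu> g * ((m (F g) / Cn g - 1) / (1 + t * (m (F g) / Cn g - 1)))))"
      unfolding Sstar_def by (simp add: sum.distrib sum_distrib_left)
    also have "\<dots> \<le> (\<Sum>g\<in>Dp. \<mu> g * ln (((1 - t) * Cn g + t * m (F g)) / \<mu> g))"
      by (rule sum_mono) (rule pt)
    also have "\<dots> \<le> T" by (rule key1[OF m t])
    finally have "t * (\<Sum>g\<in>Dp. \<mu> g * ((m (F g) / Cn g - 1) / (1 + t * (m (F g) / Cn g - 1)))) \<le> 0"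
      using TS by simp
    then show ?thesis using t by (simp add: mult_le_0_iff)
  qed
  have sumDp: "(\<Sum>g\<in>Dp. \<mu> g) = 1"
  proof -
    have "(\<Sum>g\<in>Dp. \<mu> g) = (\<Sum>g\<in>D. \<mu> g)"
      unfolding Dp_def using fin munn
      by (intro sum.mono_neutral_left) (auto simp: less_eq_real_def)
    also have "\<dots> = \<mu> (\<lambda>x. \<Sum>g\<in>D. g x)"
      using lin_sum[OF _ fin Dsub] muMC unfolding MC_def by auto
    also have "(\<lambda>x. \<Sum>g\<in>D. g x) = (\<lambda>x. 1)" using sum1 by auto
    finally show ?thesis using lin_const[OF muMC] by simp
  qed
  have key3: "(\<Sum>g\<in>Dp. \<mu> g * m (F g) / Cn g) \<le> 1" if m: "m \<in> MC" for m
  proof -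
    define h where "h t = (\<Sum>g\<in>Dp. \<mu> g * ((m (F g) / Cn g - 1) / (1 + t * (m (F g) / Cn g - 1))))" for t :: real
    have "(\<lambda>k. h (1 / real k)) \<longlonglongrightarrow> h 0"
      unfolding h_def
      by (intro tendsto_intros lim_inverse_n') simp
    moreover have "\<exists>N. \<forall>k\<ge>N. h (1 / real k) \<le> 0"
    proof (intro exI[of _ 2] allI impI)
      fix k :: nat assume "2 \<le> k"
      then have "0 < 1 / real k" "1 / real k < 1" by auto
      then show "h (1 / real k) \<le> 0" unfolding h_def by (rule key2[OF m])
    qed
    ultimately have "h 0 \<le> 0" by (rule LIMSEQ_le_const2)
    then have "(\<Sum>g\<in>Dp. \<mu> g * (m (F g) / Cn g) - \<mu> g) \<le> 0"
      unfolding h_def by (simp add: algebra_simps)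
    then show ?thesis using sumDp by (simp add: sum_subtractf)
  qed
  have up: "(SUP m\<in>MC. ereal (\<Sum>g\<in>Dp. \<mu> g * m (F g) / Cn g)) \<le> 1"
    by (rule SUP_least) (use key3 in simp)
  have l0: "(\<lambda>i. ereal (\<Sum>g\<in>Dp. \<mu> g * ms (r i) (F g) / Cn g)) \<longlonglongrightarrow> ereal (\<Sum>g\<in>Dp. \<mu> g * Cn g / Cn g)"
    by (intro tendsto_ereal tendsto_sum tendsto_divide tendsto_mult tendsto_const)
       (use limCF Cpos in \<open>auto simp: Dp_def\<close>)
  have e1: "(\<Sum>g\<in>Dp. \<mu> g * Cn g / Cn g) = (\<Sum>g\<in>Dp. \<mu> g)"
    by (rule sum.cong) (use Cpos in auto)
  have lim1: "(\<lambda>i. ereal (\<Sum>g\<in>Dp. \<mu> g * ms (r i) (F g) / Cn g)) \<longlonglongrightarrow> 1"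
    using l0 unfolding e1 sumDp one_ereal_def .
  have "1 \<le> (SUP m\<in>MC. ereal (\<Sum>g\<in>Dp. \<mu> g * m (F g) / Cn g))"
    by (rule LIMSEQ_le_const2[OF lim1]) (use msMC in \<open>auto intro!: SUP_upper\<close>)
  with up show ?thesis unfolding Dp_def F_def by simp
qed

end
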